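(* Let $\mathsf P'\subset\mathbb R^m$ be a $(\mu',\epsilon')$-net, $0<\Gamma_0\le1$, and $0\le\delta_0\le\frac14$. Suppose $\tau=q*\sigma\subseteq\mathsf P'$ is a $(k+1)$-simplex which is a forbidden configuration certified by $q$ and $B(C,R)$. Then for every $p\in\tau$ there is a ball $B(C_p,R_p)$ circumscribing $\tau_p$ such that $$R_p\le\Big(1+\frac{3\delta_0}{\mu'\Gamma_0^k}\Big)R\quad\text{and}\quad d(p,\partial B(C_p,R_p))\le\frac{6\delta_0}{\mu'^2\Gamma_0^k}\,\ell(\tau_p).$$
   Context: Let $d(x,X)$ denote Euclidean distance from a point to a set; $B(c,r)$ is the open ball. For a finite $\mathsf P\subset\mathbb R^m$ and $\epsilon>0$, $\mathsf P$ is $\epsilon$-dense if $d(x,\mathsf P\cup\partial\,\mathrm{conv}(\mathsf P))<\epsilon$ for every $x\in\mathrm{conv}(\mathsf P)$; it is $\mu\epsilon$-separated if $\|p-q\|\ge\mu\epsilon$ for all distinct $p,q\in\mathsf P$. For $0<\mu\le1$, $\mathsf P$ is a $(\mu,\epsilon)$-net if it is $\epsilon$-dense and $\mu\epsilon$-separated. A simplex is a nonempty finite subset $\sigma\subset\mathbb R^m$ (vertices need not be affinely independent); $\dim\sigma=|\sigma|-1$; faces are nonempty subsets. For $p\in\sigma$, $\sigma_p=\sigma\setminus\{p\}$; for $p\notin\sigma$, $p*\sigma=\sigma\cup\{p\}$. $L(\sigma)$, $\ell(\sigma)$ are the largest and smallest distances between distinct vertices. Altitude $D(p,\sigma)=d(p,\mathrm{aff}(\sigma_p))$.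 Thickness of a $j$-simplex: $\Upsilon(\sigma)=1$ if $j=0$, else $\min_{p}D(p,\sigma)/(jL(\sigma))$. $\sigma$ is $\Gamma_0$-good if every $j$-face $\sigma^j$ satisfies $\Upsilon(\sigma^j)\ge\Gamma_0^j$; $\Gamma_0$-bad otherwise; a $\Gamma_0$-flake is a $\Gamma_0$-bad simplex whose proper faces are all $\Gamma_0$-good. A circumscribing ball of $\sigma$ is an open ball whose boundary contains all vertices of $\sigma$. Forbidden configuration: given finite $\mathsf P'\subset\mathbb R^m$ and parameters $\mu',\epsilon'>0$, $0<\Gamma_0\le1$, $\delta_0\ge0$, a $(k+1)$-simplex $\tau\subseteq\mathsf P'$ with $k\le m$ is a forbidden configuration if it is a $\Gamma_0$-flake and there exist $p\in\tau$ and a circumscribing ball $B(C,R)$ of $\tau_p$ with $R<\epsilon'$ and $\big|\,\|p-C\|-R\,\big|\le\delta_0\mu'\epsilon'$; it is then said to be certified by $p$ and $B(C,R)$. *)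

theory Defs
  imports "HOL-Analysis.Analysis"
begin

text \<open>Points live in an arbitrary Euclidean space 'a (playing the role of R^m, m = DIM('a)).
  d(x,X) is infdist x X. A simplex is a finite nonempty set of points.\<close>

definition eps_dense :: "'a::euclidean_space set \<Rightarrow> real \<Rightarrow> bool" where
  "eps_dense P \<epsilon> \<longleftrightarrow>
     (\<forall>x \<in> convex hull P. infdist x (P \<union> frontier (convex hull P)) < \<epsilon>)"

definition separated :: "'a::euclidean_space set \<Rightarrow> real \<Rightarrow> bool" where
  "separated P s \<longleftrightarrow> (\<forall>p\<in>P. \<forall>q\<in>P. p \<noteq> q \<longrightarrow> dist p q \<ge> s)"

definition is_net :: "'a::euclidean_space set \<Rightarrow> real \<Rightarrow> real \<Rightarrow> bool" where
  "is_net P \<mu> \<epsilon> \<longleftrightarrow> finite P \<and> 0 < \<epsilon> \<and> 0 < \<mu> \<and> \<mu> \<le> 1 \<and>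
     eps_dense P \<epsilon> \<and> separated P (\<mu> * \<epsilon>)"

definition is_simplex :: "'a set \<Rightarrow> bool" where
  "is_simplex \<sigma> \<longleftrightarrow> finite \<sigma> \<and> \<sigma> \<noteq> {}"

definition Lmax :: "'a::metric_space set \<Rightarrow> real" where
  "Lmax \<sigma> = Max {dist p q | p q. p \<in> \<sigma> \<and> q \<in> \<sigma> \<and> p \<noteq> q}"

definition lmin :: "'a::metric_space set \<Rightarrow> real" where
  "lmin \<sigma> = Min {dist p q | p q. p \<in> \<sigma> \<and> q \<in> \<sigma> \<and> p \<noteq> q}"

definition altitude :: "'a::euclidean_space \<Rightarrow> 'a set \<Rightarrow> real" where
  "altitude p \<sigma> = infdist p (affine hull (\<sigma> - {p}))"

definition thickness :: "'a::euclidean_space set \<Rightarrow> real" where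
  "thickness \<sigma> = (if card \<sigma> - 1 = 0 then 1
      else Min ((\<lambda>p. altitude p \<sigma>) ` \<sigma>) / (real (card \<sigma> - 1) * Lmax \<sigma>))"

definition good :: "real \<Rightarrow> 'a::euclidean_space set \<Rightarrow> bool" where
  "good \<Gamma>0 \<sigma> \<longleftrightarrow> (\<forall>\<phi>. \<phi> \<subseteq> \<sigma> \<and> \<phi> \<noteq> {} \<longrightarrow> thickness \<phi> \<ge> \<Gamma>0 ^ (card \<phi> - 1))"

definition flake :: "real \<Rightarrow> 'a::euclidean_space set \<Rightarrow> bool" where
  "flake \<Gamma>0 \<sigma> \<longleftrightarrow> is_simplex \<sigma> \<and> \<not> good \<Gamma>0 \<sigma> \<and>
     (\<forall>\<phi>. \<phi> \<subset> \<sigma> \<and> \<phi> \<noteq> {} \<longrightarrow> good \<Gamma>0 \<phi>)"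

definition circumscribing :: "'a::euclidean_space \<Rightarrow> real \<Rightarrow> 'a set \<Rightarrow> bool" where
  "circumscribing c r \<sigma> \<longleftrightarrow> 0 < r \<and> \<sigma> \<subseteq> frontier (ball c r)"

definition forbidden_certified ::
  "'a::euclidean_space set \<Rightarrow> real \<Rightarrow> real \<Rightarrow> real \<Rightarrow> real \<Rightarrow> nat \<Rightarrow> 'a set
     \<Rightarrow> 'a \<Rightarrow> 'a \<Rightarrow> real \<Rightarrow> bool" where
  "forbidden_certified P' \<mu>' \<epsilon>' \<Gamma>0 \<delta>0 k \<tau> p C R \<longleftrightarrow>
     is_simplex \<tau> \<and> card \<tau> = k + 2 \<and> \<tau> \<subseteq> P' \<and> k \<le> DIM('a) \<and> flake \<Gamma>0 \<tau> \<and>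
     p \<in> \<tau> \<and> circumscribing C R (\<tau> - {p}) \<and> R < \<epsilon>' \<and>
     \<bar>norm (p - C) - R\<bar> \<le> \<delta>0 * \<mu>' * \<epsilon>'"

end

theory Submission
  imports Defs
begin


lemma proj_orth:
  fixes q a y :: "'a::euclidean_space"
  assumes A: "affine A" and a: "a \<in> A" and y: "y \<in> A"
    and min: "\<And>z. z \<in> A \<Longrightarrow> dist q a \<le> dist q z"
  shows "inner (q - a) (y - a) = 0"
proof (cases "y = a")
  case True then show ?thesis by simp
next
  case False
  define u where "u = q - a"
  define d where "d = y - a"
  have d0: "d \<bullet> d > 0" using False by (simp add: d_def)
  define t where "t = (u \<bullet> d) / (d \<bullet> d)"
  have "(1 - t) *\<^sub>R a + t *\<^sub>R y \<in> A" using mem_affine[OF A a y] by simp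
  moreover have "(1 - t) *\<^sub>R a + t *\<^sub>R y = a + t *\<^sub>R d" by (simp add: d_def algebra_simps)
  ultimately have "dist q a \<le> dist q (a + t *\<^sub>R d)" using min by metis
  hence "norm u \<le> norm (u - t *\<^sub>R d)" by (simp add: dist_norm u_def algebra_simps)
  hence "norm u ^ 2 \<le> norm (u - t *\<^sub>R d) ^ 2" by (simp add: power_mono)
  hence "u \<bullet> u \<le> (u - t *\<^sub>R d) \<bullet> (u - t *\<^sub>R d)" by (simp add: power2_norm_eq_inner)
  hence "0 \<le> t * t * (d \<bullet> d) - 2 * t * (u \<bullet> d)"
    by (simp add: inner_diff_left inner_diff_right inner_commute algebra_simps)
  also have "t * t * (d \<bullet> d) - 2 * t * (u \<bullet> d) = - ((u \<bullet> d)^2 / (d \<bullet> d))"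
    using d0 by (simp add: t_def field_simps power2_eq_square)
  finally have "(u \<bullet> d)^2 / (d \<bullet> d) \<le> 0" by simp
  hence "(u \<bullet> d)^2 \<le> 0" using d0 by (simp add: divide_le_0_iff)
  hence "u \<bullet> d = 0" by simp
  then show ?thesis by (simp add: u_def d_def)
qed

lemma infdist_sphere_le:
  fixes x c :: "'a::euclidean_space"
  assumes "0 < r"
  shows "infdist x (sphere c r) \<le> \<bar>dist x c - r\<bar>"
proof (cases "x = c")
  case True
  obtain b :: 'a where b: "b \<in> Basis" using nonempty_Basis by blast
  have "c + r *\<^sub>R b \<in> sphere c r" using b assms by (simp add: dist_norm)
  moreover have "dist x (c + r *\<^sub>R b) = r" using b assms True by (simp add: dist_norm)
  ultimately show ?thesis using True assms by (metis infdist_le abs_of_pos diff_0 abs_minus_cancel dist_self)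
next
  case False
  define z where "z = c + (r / dist x c) *\<^sub>R (x - c)"
  have dp: "dist x c > 0" using False by simp
  have zs: "z \<in> sphere c r" using dp assms by (simp add: z_def dist_norm norm_minus_commute)
  have "x - z = (1 - r / dist x c) *\<^sub>R (x - c)" by (simp add: z_def algebra_simps)
  hence "dist x z = \<bar>1 - r / dist x c\<bar> * dist x c" by (simp add: dist_norm)
  also have "\<dots> = \<bar>dist x c - r\<bar>" using dp
  proof -
    have "\<bar>1 - r / dist x c\<bar> * dist x c = \<bar>(1 - r / dist x c) * dist x c\<bar>" using dp by (simp add: abs_mult)
    also have "(1 - r / dist x c) * dist x c = dist x c - r" using dp by (simp add: field_simps)
    finally show ?thesis .
  qed
  finally show ?thesis using infdist_le[OF zs, of x] by linarith
qed


lemma pairs_finite: "finite S \<Longrightarrow> finite {dist p q | p q. p \<in> S \<and> q \<in> S \<and> p \<noteq> q}"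
proof -
  assume "finite S"
  have "{dist p q | p q. p \<in> S \<and> q \<in> S \<and> p \<noteq> q} \<subseteq> (\<lambda>(p,q). dist p q) ` (S \<times> S)" by auto
  thus ?thesis using \<open>finite S\<close> by (meson finite_SigmaI finite_imageI finite_subset)
qed

lemma Lmax_ge: "finite S \<Longrightarrow> p \<in> S \<Longrightarrow> q \<in> S \<Longrightarrow> p \<noteq> q \<Longrightarrow> dist p q \<le> Lmax S"
  unfolding Lmax_def by (rule Max_ge) (auto intro: pairs_finite)

lemma lmin_ge:
  assumes "finite S" "p \<in> S" "q \<in> S" "p \<noteq> q" "\<And>x y. x \<in> S \<Longrightarrow> y \<in> S \<Longrightarrow> x \<noteq> y \<Longrightarrow> s \<le> dist x y"
  shows "s \<le> lmin S"
  unfolding lmin_def using assms by (subst Min_ge_iff) (auto intro: pairs_finite)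

lemma thick_small:
  fixes \<phi> :: "'a::euclidean_space set"
  assumes "finite \<phi>" "\<phi> \<noteq> {}" "card \<phi> \<le> 2" "0 < \<Gamma>" "\<Gamma> \<le> 1"
  shows "\<Gamma> ^ (card \<phi> - 1) \<le> thickness \<phi>"
proof -
  have "card \<phi> = 1 \<or> card \<phi> = 2" using assms by (metis card_0_eq le_Suc_eq le_zero_eq numeral_2_eq_2 One_nat_def)
  thus ?thesis
  proof
    assume "card \<phi> = 1" thus ?thesis by (simp add: thickness_def)
  next
    assume c2: "card \<phi> = 2"
    then obtain a b where ab: "\<phi> = {a,b}" "a \<noteq> b" by (meson card_2_iff)
    have alt: "altitude a \<phi> = dist a b" "altitude b \<phi> = dist a b"
      using ab by (auto simp: altitude_def insert_Diff_if dist_commute)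
    have "{dist p q | p q. p \<in> \<phi> \<and> q \<in> \<phi> \<and> p \<noteq> q} = {dist a b}"
      using ab by (auto simp: dist_commute)
    hence L: "Lmax \<phi> = dist a b" by (simp add: Lmax_def)
    have "thickness \<phi> = 1" using c2 ab alt L by (simp add: thickness_def)
    thus ?thesis using c2 assms by simp
  qed
qed

lemma k_pos:
  fixes \<tau> :: "'a::euclidean_space set"
  assumes "flake \<Gamma> \<tau>" "card \<tau> = k + 2" "0 < \<Gamma>" "\<Gamma> \<le> 1"
  shows "1 \<le> k"
proof (rule ccontr)
  assume "\<not> 1 \<le> k"
  hence k: "card \<tau> = 2" using assms by simp
  have fin: "finite \<tau>" using assms by (simp add: flake_def is_simplex_def)
  have "good \<Gamma> \<tau>" unfolding good_def
  proof (intro allI impI)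
    fix \<phi> :: "'a set" assume "\<phi> \<subseteq> \<tau> \<and> \<phi> \<noteq> {}"
    moreover hence "finite \<phi>" "card \<phi> \<le> 2" using fin k by (auto intro: finite_subset card_mono simp: k[symmetric])
    ultimately show "\<Gamma> ^ (card \<phi> - 1) \<le> thickness \<phi>" using thick_small assms by blast
  qed
  thus False using assms by (simp add: flake_def)
qed


lemma norm_shift: "norm (x - (C + w)) ^ 2 = norm (x - C) ^ 2 - 2 * ((x - C) \<bullet> w) + norm w ^ 2"
  for x C w :: "'a::euclidean_space"
  by (simp add: power2_norm_eq_inner inner_diff_left inner_diff_right inner_add_right inner_commute algebra_simps)

theorem mainTheorem7:
  fixes P' :: "'a::euclidean_space set" and \<mu>' \<epsilon>' \<Gamma>0 \<delta>0 R :: real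
    and k :: nat and \<tau> \<sigma> :: "'a set" and q C :: 'a
  assumes "is_net P' \<mu>' \<epsilon>'"
    and "0 < \<Gamma>0" "\<Gamma>0 \<le> 1"
    and "0 \<le> \<delta>0" "\<delta>0 \<le> 1/4"
    and "q \<notin> \<sigma>" "\<tau> = insert q \<sigma>"
    and "forbidden_certified P' \<mu>' \<epsilon>' \<Gamma>0 \<delta>0 k \<tau> q C R"
  shows "\<forall>p\<in>\<tau>. \<exists>Cp Rp. circumscribing Cp Rp (\<tau> - {p}) \<and>
           Rp \<le> (1 + 3 * \<delta>0 / (\<mu>' * \<Gamma>0 ^ k)) * R \<and>
           infdist p (frontier (ball Cp Rp)) \<le> 6 * \<delta>0 / (\<mu>'^2 * \<Gamma>0 ^ k) * lmin (\<tau> - {p})"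
proof
  fix p assume p\<tau>: "p \<in> \<tau>"
  note fc = assms(8)[unfolded forbidden_certified_def]
  have net: "finite P'" "0 < \<epsilon>'" "0 < \<mu>'" "\<mu>' \<le> 1" "separated P' (\<mu>' * \<epsilon>')"
    using assms(1) by (auto simp: is_net_def)
  have fin: "finite \<tau>" and card\<tau>: "card \<tau> = k + 2" and sub: "\<tau> \<subseteq> P'" and fl: "flake \<Gamma>0 \<tau>"
    using fc by (auto simp: is_simplex_def)
  have k1: "1 \<le> k" using k_pos[OF fl card\<tau> assms(2,3)] .
  have \<sigma>eq: "\<tau> - {q} = \<sigma>" using assms(6,7) by auto
  have R0: "0 < R" and \<sigma>S: "\<sigma> \<subseteq> sphere C R" using fc \<sigma>eq by (auto simp: circumscribing_def)
  have Rlt: "R < \<epsilon>'" and qdev: "\<bar>norm (q - C) - R\<bar> \<le> \<delta>0 * \<mu>' * \<epsilon>'" using fc by auto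
  define me where "me = \<mu>' * \<epsilon>'"
  have me0: "0 < me" using net by (simp add: me_def)
  have sep: "\<And>x y. x \<in> \<tau> \<Longrightarrow> y \<in> \<tau> \<Longrightarrow> x \<noteq> y \<Longrightarrow> me \<le> dist x y"
    using net(5) sub by (auto simp: separated_def me_def)
  have fin\<sigma>: "finite \<sigma>" using fin assms(7) by simp
  have card\<sigma>: "card \<sigma> = k + 1" using card\<tau> assms(6,7) fin\<sigma> by simp
  define G where "G = \<Gamma>0 ^ k"
  have G0: "0 < G" and G1: "G \<le> 1" using assms(2,3) by (auto simp: G_def power_le_one)
  have qdev': "\<bar>dist q C - R\<bar> \<le> \<delta>0 * me" using qdev by (simp add: dist_norm me_def mult.assoc)
  show "\<exists>Cp Rp. circumscribing Cp Rp (\<tau> - {p}) \<and>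
           Rp \<le> (1 + 3 * \<delta>0 / (\<mu>' * \<Gamma>0 ^ k)) * R \<and>
           infdist p (frontier (ball Cp Rp)) \<le> 6 * \<delta>0 / (\<mu>'^2 * \<Gamma>0 ^ k) * lmin (\<tau> - {p})"
  proof (cases "p = q")
    case True
    have "2 \<le> card \<sigma>" using card\<sigma> k1 by simp
    then obtain x y where xy: "x \<in> \<sigma>" "y \<in> \<sigma>" "x \<noteq> y"
      by (metis card_le_Suc0_iff_eq not_less_eq_eq numeral_2_eq_2 fin\<sigma>)
    have lm: "me \<le> lmin \<sigma>"
      by (rule lmin_ge[OF fin\<sigma> xy]) (use sep assms(7) in auto)
    have c1: "1 \<le> 6 / (\<mu>'^2 * G)"
    proof -
      have "\<mu>'^2 * G \<le> 1" using net G0 G1 by (simp add: mult_le_one power_le_one)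
      moreover have "0 < \<mu>'^2 * G" using net G0 by simp
      ultimately show ?thesis by (simp add: le_divide_eq)
    qed
    have "infdist q (frontier (ball C R)) \<le> \<delta>0 * me"
      using infdist_sphere_le[OF R0, of q C] R0 qdev' by simp
    also have "\<delta>0 * me \<le> (6 / (\<mu>'^2 * G)) * \<delta>0 * lmin \<sigma>"
    proof -
      have "\<delta>0 * me \<le> \<delta>0 * lmin \<sigma>" using lm assms(4) by (simp add: mult_left_mono)
      also have "\<dots> \<le> (6 / (\<mu>'^2 * G)) * (\<delta>0 * lmin \<sigma>)"
        using mult_right_mono[OF c1, of "\<delta>0 * lmin \<sigma>"] lm me0 assms(4) by simp
      finally show ?thesis by simp
    qed
    finally have "infdist q (frontier (ball C R)) \<le> 6 * \<delta>0 / (\<mu>'^2 * \<Gamma>0 ^ k) * lmin (\<tau> - {q})"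
      using \<sigma>eq by (simp add: G_def)
    moreover have "circumscribing C R (\<tau> - {q})" using fc by simp
    moreover have "R \<le> (1 + 3 * \<delta>0 / (\<mu>' * \<Gamma>0 ^ k)) * R"
      using R0 assms(2,4) net by simp
    ultimately show ?thesis using True by blast
  next
    case False
    hence p\<sigma>: "p \<in> \<sigma>" using p\<tau> assms(7) by simp
    define \<sigma>p where "\<sigma>p = \<sigma> - {p}"
    have fin\<sigma>p: "finite \<sigma>p" using fin\<sigma> by (simp add: \<sigma>p_def)
    have "card \<sigma>p = k" using card\<sigma> p\<sigma> fin\<sigma> by (simp add: \<sigma>p_def)
    hence "\<sigma>p \<noteq> {}" using k1 by auto
    then obtain s0 where s0: "s0 \<in> \<sigma>p" by blast
    have \<tau>p: "\<tau> - {p} = insert q \<sigma>p" using False assms(7) by (auto simp: \<sigma>p_def)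
    have q\<sigma>p: "q \<notin> \<sigma>p" using assms(6) by (simp add: \<sigma>p_def)
    have s0p: "s0 \<noteq> p" "s0 \<in> \<sigma>" "s0 \<noteq> q" using s0 q\<sigma>p by (auto simp: \<sigma>p_def)
    define A where "A = affine hull \<sigma>p"
    have "closed A" "A \<noteq> {}" using s0 by (auto simp: A_def)
    then obtain a where aA: "a \<in> A" and ad: "infdist q A = dist q a" by (metis infdist_attains_inf)
    have orth: "\<And>y. y \<in> A \<Longrightarrow> (q - a) \<bullet> (y - a) = 0"
      by (rule proj_orth[of A]) (use aA ad in \<open>auto simp: A_def dest: infdist_le[of _ _ q]\<close>)
    define u where "u = q - a"
    define h where "h = norm u"
    have alt: "altitude q (\<tau> - {p}) = h"
    proof -
      have "insert q \<sigma>p - {q} = \<sigma>p" using q\<sigma>p by auto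
      thus ?thesis using ad by (simp add: altitude_def \<tau>p A_def h_def u_def dist_norm)
    qed
    have card\<tau>p: "card (\<tau> - {p}) = k + 1" using card\<tau> p\<tau> fin by simp
    have ps: "\<tau> - {p} \<subset> \<tau>" "\<tau> - {p} \<noteq> {}" using p\<tau> \<tau>p by auto
    have all: "\<forall>\<phi>. \<phi> \<subset> \<tau> \<and> \<phi> \<noteq> {} \<longrightarrow> good \<Gamma>0 \<phi>" using fl unfolding flake_def by (elim conjE)
    have "good \<Gamma>0 (\<tau> - {p})" using all[rule_format, OF conjI[OF ps]] .
    hence "\<Gamma>0 ^ (card (\<tau> - {p}) - 1) \<le> thickness (\<tau> - {p})" unfolding good_def using ps(2) by blast
    hence th: "G \<le> thickness (\<tau> - {p})" using card\<tau>p by (simp add: G_def)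
    have fin\<tau>p: "finite (\<tau> - {p})" using fin by simp
    have Lge: "dist q s0 \<le> Lmax (\<tau> - {p})" using Lmax_ge[OF fin\<tau>p, of q s0] \<tau>p s0 s0p by auto
    have meL: "me \<le> Lmax (\<tau> - {p})" using sep[of q s0] s0p assms(7) Lge by auto
    define Mn where "Mn = Min ((\<lambda>x. altitude x (\<tau> - {p})) ` (\<tau> - {p}))"
    have "thickness (\<tau> - {p}) = Mn / (real k * Lmax (\<tau> - {p}))"
      using card\<tau>p k1 by (simp add: thickness_def Mn_def)
    hence "G * (real k * Lmax (\<tau> - {p})) \<le> Mn" using th k1 me0 meL
      by (simp add: le_divide_eq)
    moreover have "Mn \<le> h"
    proof -
      have "q \<in> \<tau> - {p}" using \<tau>p by simp
      hence "altitude q (\<tau> - {p}) \<in> (\<lambda>x. altitude x (\<tau> - {p})) ` (\<tau> - {p})" by blast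
      hence "Mn \<le> altitude q (\<tau> - {p})" unfolding Mn_def using fin\<tau>p by (intro Min_le) auto
      thus ?thesis using alt by simp
    qed
    moreover have "G * me \<le> G * (real k * Lmax (\<tau> - {p}))"
    proof -
      have "1 * Lmax (\<tau> - {p}) \<le> real k * Lmax (\<tau> - {p})"
        by (rule mult_right_mono) (use k1 meL me0 in auto)
      hence "me \<le> real k * Lmax (\<tau> - {p})" using meL by simp
      thus ?thesis using G0 by simp
    qed
    ultimately have hge: "G * me \<le> h" by linarith
    have "0 < G * me" using G0 me0 by simp
    hence h0: "0 < h" using hge by linarith
    have "me \<le> dist p s0" using sep p\<tau> s0p assms(7) by auto
    also have "dist p s0 \<le> dist p C + dist C s0" by (rule dist_triangle)
    also have "\<dots> = 2 * R"
    proof -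
      have "p \<in> sphere C R" "s0 \<in> sphere C R" using \<sigma>S p\<sigma> s0p by auto
      thus ?thesis by (simp add: dist_commute)
    qed
    finally have meR: "me \<le> 2 * R" .
    define \<pi> where "\<pi> = norm (q - C) ^ 2 - R ^ 2"
    define w where "w = (\<pi> / (2 * h ^ 2)) *\<^sub>R u"
    define Cp where "Cp = C + w"
    define Rp where "Rp = dist s0 Cp"
    have u\<sigma>: "\<And>s. s \<in> \<sigma>p \<Longrightarrow> (s - s0) \<bullet> u = 0"
    proof -
      fix s assume "s \<in> \<sigma>p"
      hence "s \<in> A" "s0 \<in> A" using s0 by (auto simp: A_def hull_inc)
      hence "(s - a) \<bullet> u = 0" "(s0 - a) \<bullet> u = 0" using orth by (metis inner_commute u_def)+
      moreover have "s - s0 = (s - a) - (s0 - a)" by simp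
      ultimately show "(s - s0) \<bullet> u = 0" by (metis inner_diff_left diff_self)
    qed
    have uq: "(q - s0) \<bullet> u = h ^ 2"
    proof -
      have "s0 \<in> A" using s0 by (auto simp: A_def hull_inc)
      hence "(s0 - a) \<bullet> u = 0" using orth by (metis inner_commute u_def)
      moreover have "q - s0 = u - (s0 - a)" by (simp add: u_def)
      ultimately have "(q - s0) \<bullet> u = u \<bullet> u" by (simp only: inner_diff_left)
      thus ?thesis by (simp add: h_def power2_norm_eq_inner)
    qed
    have nsq: "\<And>x. dist x Cp ^ 2 = norm (x - C) ^ 2 - 2 * ((x - C) \<bullet> w) + norm w ^ 2"
      by (simp add: dist_norm Cp_def norm_shift)
    have "s0 \<in> sphere C R" using \<sigma>S s0p by auto
    hence s0C: "norm (s0 - C) = R" by (simp add: dist_norm norm_minus_commute)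
    have onS: "\<And>x. dist x Cp ^ 2 = Rp ^ 2 \<Longrightarrow> dist x Cp = Rp"
      by (simp add: Rp_def power2_eq_iff_nonneg)
    have sph: "\<tau> - {p} \<subseteq> sphere Cp Rp"
    proof
      fix x assume "x \<in> \<tau> - {p}"
      hence "x = q \<or> x \<in> \<sigma>p" using \<tau>p by auto
      thus "x \<in> sphere Cp Rp"
      proof
        assume xq: "x = q"
        have "(q - C) \<bullet> w - (s0 - C) \<bullet> w = (q - s0) \<bullet> w" by (simp add: inner_diff_left)
        also have "\<dots> = \<pi> / 2" using uq h0 by (simp add: w_def)
        finally have "dist q Cp ^ 2 = Rp ^ 2"
          using nsq[of q] nsq[of s0] s0C by (simp add: Rp_def \<pi>_def)
        hence "dist q Cp = Rp" using onS by blast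
        thus ?thesis using xq by (simp add: dist_commute)
      next
        assume xs: "x \<in> \<sigma>p"
        have "x \<in> sphere C R" using \<sigma>S xs by (auto simp: \<sigma>p_def)
        hence xC: "norm (x - C) = R" by (simp add: dist_norm norm_minus_commute)
        have "(x - C) \<bullet> w - (s0 - C) \<bullet> w = (x - s0) \<bullet> w" by (simp add: inner_diff_left)
        also have "\<dots> = 0" using u\<sigma>[OF xs] by (simp add: w_def)
        finally have "dist x Cp ^ 2 = Rp ^ 2"
          using nsq[of x] nsq[of s0] s0C xC by (simp add: Rp_def)
        hence "dist x Cp = Rp" using onS by blast
        thus ?thesis by (simp add: dist_commute)
      qed
    qed
    have Rp0: "0 < Rp"
    proof -
      have "q \<in> sphere Cp Rp" "s0 \<in> sphere Cp Rp" using sph \<tau>p s0 by auto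
      hence "Rp \<noteq> 0" using s0p by auto
      thus ?thesis by (simp add: Rp_def)
    qed
    have nw: "norm w = \<bar>\<pi>\<bar> / (2 * h)" using h0 by (simp add: w_def h_def[symmetric] power2_eq_square abs_mult)
    have "\<delta>0 * me \<le> (1/4) * (2 * R)" by (rule mult_mono) (use meR assms(4,5) me0 in auto)
    hence dme: "\<delta>0 * me \<le> R / 2" by simp
    have "\<bar>\<pi>\<bar> = \<bar>dist q C - R\<bar> * (dist q C + R)"
    proof -
      have "\<pi> = (dist q C - R) * (dist q C + R)" by (simp add: \<pi>_def dist_norm power2_eq_square algebra_simps)
      moreover have "0 \<le> dist q C + R" using R0 by simp
      ultimately show ?thesis by (simp add: abs_mult)
    qed
    also have "\<dots> \<le> (\<delta>0 * me) * (5/2 * R)"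
    proof (rule mult_mono)
      show "\<bar>dist q C - R\<bar> \<le> \<delta>0 * me" by (rule qdev')
      show "dist q C + R \<le> 5/2 * R" using qdev' dme by linarith
    qed (use assms(4) me0 R0 in auto)
    finally have pib: "\<bar>\<pi>\<bar> \<le> (\<delta>0 * me) * (5/2 * R)" .
    have "norm w \<le> (\<delta>0 * me) * (5/2 * R) / (2 * (G * me))"
      unfolding nw by (rule frac_le) (use pib hge G0 me0 assms(4) R0 in auto)
    also have "\<dots> = 5/4 * \<delta>0 * R / G" using me0 G0 by (simp add: field_simps)
    finally have wb: "norm w \<le> 5/4 * \<delta>0 * R / G" .
    have dCp: "dist C Cp = norm w" by (simp add: Cp_def dist_norm)
    have Rpb: "\<bar>Rp - R\<bar> \<le> norm w"
      using dist_triangle[of s0 Cp C] dist_triangle[of s0 C Cp] s0C dCp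
      by (simp add: Rp_def dist_norm norm_minus_commute dist_commute) 
    have "p \<in> sphere C R" using \<sigma>S p\<sigma> by auto
    hence pC: "dist p C = R" by (simp add: dist_commute)
    have pb: "\<bar>dist p Cp - R\<bar> \<le> norm w"
      using dist_triangle[of p Cp C] dist_triangle[of p C Cp] pC dCp by (simp add: dist_commute)
    have key: "5/4 * \<delta>0 * R / G \<le> \<delta>0 * R / G * (3 / \<mu>')"
    proof -
      have "5/4 \<le> 3 / \<mu>'" using net by (simp add: le_divide_eq)
      moreover have "0 \<le> \<delta>0 * R / G" using assms(4) R0 G0 by simp
      ultimately have "\<delta>0 * R / G * (5/4) \<le> \<delta>0 * R / G * (3 / \<mu>')" by (rule mult_left_mono)
      thus ?thesis by simp
    qed
    have r1: "Rp \<le> (1 + 3 * \<delta>0 / (\<mu>' * \<Gamma>0 ^ k)) * R"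
    proof -
      have "Rp \<le> R + \<delta>0 * R / G * (3 / \<mu>')" using Rpb wb key by linarith
      also have "\<dots> = (1 + 3 * \<delta>0 / (\<mu>' * \<Gamma>0 ^ k)) * R" using net G0 by (simp add: G_def field_simps)
      finally show ?thesis .
    qed
    have r2: "infdist p (frontier (ball Cp Rp)) \<le> 6 * \<delta>0 / (\<mu>'^2 * \<Gamma>0 ^ k) * lmin (\<tau> - {p})"
    proof -
      have "infdist p (frontier (ball Cp Rp)) \<le> \<bar>dist p Cp - Rp\<bar>"
        using infdist_sphere_le[OF Rp0] Rp0 by simp
      also have "\<dots> \<le> 2 * norm w" using Rpb pb by linarith
      also have "\<dots> \<le> 2 * (\<delta>0 * R / G * (3 / \<mu>'))" using wb key by linarith
      also have "\<dots> = 6 * \<delta>0 / (\<mu>'^2 * G) * (\<mu>' * R)" using net G0 by (simp add: field_simps power2_eq_square)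
      also have "\<dots> \<le> 6 * \<delta>0 / (\<mu>'^2 * G) * lmin (\<tau> - {p})"
      proof (rule mult_left_mono)
        have "\<mu>' * R \<le> me" using Rlt net by (simp add: me_def)
        also have "me \<le> lmin (\<tau> - {p})"
          by (rule lmin_ge[OF fin\<tau>p, of q s0]) (use \<tau>p s0 s0p sep in auto)
        finally show "\<mu>' * R \<le> lmin (\<tau> - {p})" .
        show "0 \<le> 6 * \<delta>0 / (\<mu>'^2 * G)" using assms(4) G0 by simp
      qed
      finally show ?thesis by (simp add: G_def)
    qed
    have "circumscribing Cp Rp (\<tau> - {p})" using sph Rp0 by (simp add: circumscribing_def)
    thus ?thesis using r1 r2 by blast
  qed
qed
end
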